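(* Let $\mu>0$, $a\in\left(-\frac{2\mu}{9},0\right)\cup\left(0,\frac{4\mu}{9}\right)$, $\alpha_0\in\mathbb{C}$, and let $\mathcal{A}(\cdot\,;a):[\frac{2\mu}{3},\infty)\to[0,\infty)$ be measurable, not almost everywhere zero, with $\int_{2\mu/3}^{\infty}\frac{ds'}{s'}\mathcal{A}(s';a)|\beta_1(a,s')|<\infty$. For $|\tilde z|<1$ define $\mathcal{T}(\tilde z,a):=\alpha_0+\frac{1}{\pi}\int_{2\mu/3}^{\infty}\frac{ds'}{s'}\,\mathcal{A}(s';a)\,H(s',\tilde z;a)$, and $\alpha_1(a)a^2:=\frac1\pi\int_{2\mu/3}^\infty\frac{ds'}{s'}\mathcal{A}(s';a)\beta_1(a,s')$, and $f(\tilde z,a):=\dfrac{\mathcal{T}(\tilde z,a)-\alpha_0}{\alpha_1(a)a^2}$. Then (1) $|f(\tilde z,a)|\le\dfrac{|\tilde z|}{(1-|\tilde z|)^2}$ for all $|\tilde z|<1$; (2) $|f(\tilde z,a)|\ge\dfrac{|\tilde z|}{(1+|\tilde z|)^2}$ for all real $\tilde z$ with $|\tilde z|<1$.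
   Context: For real $a$ and $s_1>0$ the crossing symmetric kernel is $H(s_1,\tilde z;a)=\dfrac{27a^2\tilde z\,(2s_1-3a)}{27a^3\tilde z-27a^2\tilde z s_1-(1-\tilde z)^2s_1^3}$, and $\beta_1(a,s_1)=\frac{27a^2}{s_1^3}(3a-2s_1)$ is its first Taylor coefficient in $\tilde z$ at $\tilde z=0$. (Physically $\mathcal{T}$ is the crossing symmetric dispersive representation of a unitary $2\to2$ scalar amplitude with $\mu=4m^2$ and $\mathcal{A}\ge0$ its absorptive part.) *)

theory Defs
  imports "HOL-Analysis.Analysis"
begin

definition beta1 :: "real \<Rightarrow> real \<Rightarrow> real" where
  "beta1 a t = 27 * a^2 / t^3 * (3*a - 2*t)"

definition Hker :: "real \<Rightarrow> complex \<Rightarrow> real \<Rightarrow> complex" where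
  "Hker t z a =
     (27 * of_real (a^2) * z * of_real (2*t - 3*a)) /
     (27 * of_real (a^3) * z - 27 * of_real (a^2) * z * of_real t - (1 - z)^2 * of_real (t^3))"

definition Tamp :: "real \<Rightarrow> complex \<Rightarrow> (real \<Rightarrow> real) \<Rightarrow> complex \<Rightarrow> real \<Rightarrow> complex" where
  "Tamp \<mu> \<alpha>0 A z a =
     \<alpha>0 + of_real (1/pi) *
       (LINT s:{2*\<mu>/3..}|lebesgue. of_real (A s / s) * Hker s z a)"

definition alpha1a2 :: "real \<Rightarrow> (real \<Rightarrow> real) \<Rightarrow> real \<Rightarrow> real" where
  "alpha1a2 \<mu> A a = (1/pi) * (LINT s:{2*\<mu>/3..}|lebesgue. A s / s * beta1 a s)"

definition fnorm :: "real \<Rightarrow> complex \<Rightarrow> (real \<Rightarrow> real) \<Rightarrow> complex \<Rightarrow> real \<Rightarrow> complex" where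
  "fnorm \<mu> \<alpha>0 A z a = (Tamp \<mu> \<alpha>0 A z a - \<alpha>0) / of_real (alpha1a2 \<mu> A a)"

end

theory Submission
  imports Defs
begin

lemma key_denom:
  fixes c :: real and z :: complex
  assumes "0 \<le> c" "c \<le> 4" "cmod z < 1"
  shows "cmod ((1-z)^2 + of_real c * z) \<ge> (1 - cmod z)^2"
proof -
  define p where "p = (2 - c)/2"
  have p: "\<bar>p\<bar> \<le> 1" using assms unfolding p_def by auto
  define u where "u = Complex p (sqrt (1 - p^2))"
  have pp: "p^2 \<le> 1" using p by (simp add: abs_square_le_1)
  have q: "sqrt (1-p^2) ^2 = 1 - p^2" using pp by simp
  have u1: "u * cnj u = 1" unfolding u_def using q by (simp add: complex_eq_iff power2_eq_square)
  have u2: "u + cnj u = of_real (2 - c)" unfolding u_def p_def by (simp add: complex_eq_iff)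
  have nu: "cmod u = 1" using u1
    by (metis complex_norm_square norm_one of_real_eq_1_iff power2_eq_square real_sqrt_one real_sqrt_unique norm_ge_zero power_one)
  have nv: "cmod (cnj u) = 1" using nu by simp
  have fac: "(1-z)^2 + of_real c * z = (1 - u*z) * (1 - cnj u * z)"
  proof -
    have "(1 - u*z) * (1 - cnj u * z) = 1 - (u + cnj u) * z + (u * cnj u) * z^2"
      by (simp add: algebra_simps power2_eq_square)
    also have "\<dots> = (1-z)^2 + of_real c * z" unfolding u1 u2
      by (simp add: algebra_simps power2_eq_square)
    finally show ?thesis by simp
  qed
  have b: "cmod (1 - w * z) \<ge> 1 - cmod z" if "cmod w = 1" for w
  proof -
    have "cmod (w*z) = cmod z" using that by (simp add: norm_mult)
    moreover have "cmod (1::complex) - cmod (w*z) \<le> cmod (1 - w*z)" by (rule norm_triangle_ineq2)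
    ultimately show ?thesis by simp
  qed
  have "(1 - cmod z)^2 = (1 - cmod z) * (1 - cmod z)" by (simp add: power2_eq_square)
  also have "\<dots> \<le> cmod (1 - u*z) * cmod (1 - cnj u * z)"
    apply (rule mult_mono) using b[OF nu] b[OF nv] assms by auto
  also have "\<dots> = cmod ((1-z)^2 + of_real c * z)" unfolding fac by (simp add: norm_mult)
  finally show ?thesis .
qed

lemma Hker_eq:
  assumes "s > 0"
  shows "Hker s z a = of_real (beta1 a s) * (z / ((1-z)^2 + of_real (27*a^2*(s-a)/s^3) * z))"
proof -
  define D where "D = (1-z)^2 + of_real (27*a^2*(s-a)/s^3) * z"
  have den: "27 * of_real (a^3) * z - 27 * of_real (a^2) * z * of_real s - (1 - z)^2 * of_real (s^3)
     = - of_real (s^3) * D" unfolding D_def using assms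
    by (simp add: field_simps power2_eq_square power3_eq_cube) 
  show ?thesis
  proof (cases "D = 0")
    case True then show ?thesis unfolding Hker_def den D_def[symmetric] by simp
  next
    case False then show ?thesis unfolding Hker_def den D_def[symmetric] beta1_def using assms
      by (simp add: field_simps) 
  qed
qed

lemma cbounds:
  fixes \<mu> a s :: real
  assumes "\<mu> > 0" "a \<in> {-2*\<mu>/9<..<0} \<union> {0<..<4*\<mu>/9}" "s \<ge> 2*\<mu>/3"
  shows "s > 0" "0 \<le> 27*a^2*(s-a)/s^3" "27*a^2*(s-a)/s^3 \<le> 4" "beta1 a s < 0"
proof -
  show s0: "s > 0" using assms by auto
  have sa: "s - a > 0" using assms by auto
  show "0 \<le> 27*a^2*(s-a)/s^3" using s0 sa by auto
  have "4 * s ^ 3 - 27 * a ^ 2 * (s - a) = (s + 3 * a) * (2 * s - 3 * a) ^ 2" by (simp add: algebra_simps power2_eq_square power3_eq_cube)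
  moreover have "s + 3*a \<ge> 0" using assms by auto
  ultimately have "27*a^2*(s-a) \<le> 4 * s ^ 3" by (metis diff_ge_0_iff_ge zero_le_mult_iff zero_le_power2)
  then show "27*a^2*(s-a)/s^3 \<le> 4" using s0 by (simp add: divide_le_eq)
  have "a \<noteq> 0" "3 * a - 2 * s < 0" using assms by auto
  then have "27*a^2 * (3 * a - 2 * s) < 0" by (simp add: mult_pos_neg)
  then show "beta1 a s < 0" unfolding beta1_def using s0
    by (simp add: divide_neg_pos)
qed

lemma Dr_bounds:
  fixes c x :: real
  assumes "0 \<le> c" "c \<le> 4" "\<bar>x\<bar> < 1"
  shows "0 < (1-x)^2 + c*x" "(1-x)^2 + c*x \<le> (1 + \<bar>x\<bar>)^2"
proof -
  have e1: "(1-x)^2 = 1 - 2*x + x*x" "(1+x)^2 = 1 + 2*x + x*x" "(1-x)^2 = 1 + (-2)*x + x*x"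
    by (simp_all add: power2_eq_square algebra_simps)
  have sq: "(1-x)^2 > 0" "(1+x)^2 > 0" using assms(3) by auto
  have "0 < (1-x)^2 + c*x \<and> (1-x)^2 + c*x \<le> (1 + \<bar>x\<bar>)^2"
  proof (cases "x \<ge> 0")
    case True
    have h: "0 \<le> c*x" "c*x \<le> 4*x" using True assms by (auto intro: mult_right_mono)
    have "\<bar>x\<bar> = x" using True by simp
    then show ?thesis using h e1 sq by simp
  next
    case False
    have h: "c*x \<le> 0" "4*x \<le> c*x" using False assms by (auto intro: mult_right_mono_neg mult_nonneg_nonpos)
    have ax: "\<bar>x\<bar> = -x" using False by simp
    have "0 < (1-x)^2 + c*x" using h e1 sq by linarith
    moreover have "(1-x)^2 + c*x \<le> (1 + \<bar>x\<bar>)^2" unfolding ax using h by simp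
    ultimately show ?thesis by simp
  qed
  then show "0 < (1-x)^2 + c*x" "(1-x)^2 + c*x \<le> (1 + \<bar>x\<bar>)^2" by auto
qed

theorem mainTheorem8:
  fixes \<mu> a :: real and \<alpha>0 :: complex and A :: "real \<Rightarrow> real"
  assumes "\<mu> > 0"
    and "a \<in> {-2*\<mu>/9<..<0} \<union> {0<..<4*\<mu>/9}"
    and "A \<in> borel_measurable (lebesgue_on {2*\<mu>/3..})"
    and "\<forall>s\<in>{2*\<mu>/3..}. A s \<ge> 0"
    and "\<not> (AE s in lebesgue_on {2*\<mu>/3..}. A s = 0)"
    and "set_integrable lebesgue {2*\<mu>/3..} (\<lambda>s. A s / s * \<bar>beta1 a s\<bar>)"
  shows "(\<forall>z::complex. cmod z < 1 \<longrightarrow>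
            cmod (fnorm \<mu> \<alpha>0 A z a) \<le> cmod z / (1 - cmod z)^2)
       \<and> (\<forall>x::real. \<bar>x\<bar> < 1 \<longrightarrow>
            cmod (fnorm \<mu> \<alpha>0 A (of_real x) a) \<ge> \<bar>x\<bar> / (1 + \<bar>x\<bar>)^2)"
proof -
  define S where "S = {2*\<mu>/3..}"
  define M where "M = lebesgue_on S"
  have hS: "S \<inter> space lebesgue \<in> sets lebesgue" unfolding S_def by simp
  have spM: "space M = S" unfolding M_def by simp
  have conv: "set_lebesgue_integral lebesgue S f = integral\<^sup>L M f" for f :: "real \<Rightarrow> 'b::{banach, second_countable_topology}"
    unfolding set_lebesgue_integral_def M_def by (rule integral_restrict_space[OF hS, symmetric])
  define c where "c s = 27*a^2*(s-a)/s^3" for s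
  have cb: "s \<in> S \<Longrightarrow> s > 0 \<and> 0 \<le> c s \<and> c s \<le> 4 \<and> beta1 a s < 0" for s
    using cbounds[OF assms(1,2), of s] unfolding S_def c_def by auto
  define W where "W s = A s / s * \<bar>beta1 a s\<bar>" for s
  have measA[measurable]: "A \<in> borel_measurable M" using assms(3) unfolding M_def S_def .
  have measid[measurable]: "(\<lambda>x. x) \<in> borel_measurable M" unfolding M_def
    by (intro measurable_restrict_space1 measurable_completion) simp
  have measW[measurable]: "W \<in> borel_measurable M" unfolding W_def beta1_def by measurable
  have intW: "integrable M W"
  proof -
    have "set_integrable lebesgue S W" using assms(6) unfolding S_def W_def by simp
    then show ?thesis using set_integrable_eq[OF hS, of W] unfolding M_def by blast
  qed
  have Wnn: "s \<in> S \<Longrightarrow> W s \<ge> 0" for s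
  proof -
    assume s: "s \<in> S"
    then have "A s \<ge> 0" "s > 0" using cb[OF s] assms(4) unfolding S_def by auto
    then show ?thesis unfolding W_def by simp
  qed
  define IW where "IW = integral\<^sup>L M W"
  have IWpos: "IW > 0"
  proof -
    have ge: "IW \<ge> 0" unfolding IW_def by (rule integral_nonneg_AE, rule AE_I2) (use Wnn spM in auto)
    have "IW \<noteq> 0"
    proof
      assume "IW = 0"
      moreover have "AE s in M. 0 \<le> W s" by (rule AE_I2) (use Wnn spM in auto)
      ultimately have "AE s in M. W s = 0" unfolding IW_def
        using integral_nonneg_eq_0_iff_AE[OF intW] by blast
      moreover have "AE s in M. s \<in> S" using spM by (auto intro!: AE_I2)
      ultimately have "AE s in M. A s = 0"
        by eventually_elim (use cb in \<open>fastforce simp: W_def\<close>)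
      then show False using assms(5) unfolding M_def S_def by simp
    qed
    then show ?thesis using ge by simp
  qed
  have alpha: "alpha1a2 \<mu> A a = - (1/pi) * IW"
  proof -
    have "integral\<^sup>L M (\<lambda>s. A s / s * beta1 a s) = integral\<^sup>L M (\<lambda>s. - W s)"
      proof (rule Bochner_Integration.integral_cong[OF refl])
      fix s assume "s \<in> space M"
      then have "beta1 a s < 0" using cb spM by auto
      then show "A s / s * beta1 a s = - W s" unfolding W_def by simp
    qed
    then show ?thesis unfolding alpha1a2_def IW_def conv[symmetric, of "\<lambda>s. A s / s * beta1 a s"] S_def
      by simp
  qed
  have fn: "fnorm \<mu> \<alpha>0 A z a = - integral\<^sup>L M (\<lambda>s. of_real (A s / s) * Hker s z a) / of_real IW" for z
    unfolding fnorm_def Tamp_def alpha conv[symmetric] S_def using IWpos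
    by (simp add: field_simps)
  have Feq: "s \<in> S \<Longrightarrow> of_real (A s / s) * Hker s z a = - of_real (W s) * (z / ((1-z)^2 + of_real (c s) * z))" for s z
    using cb[of s] Hker_eq[of s z a] unfolding W_def c_def by (simp add: abs_of_neg)
  have measF[measurable]: "(\<lambda>s. of_real (A s / s) * Hker s z a) \<in> borel_measurable M" for z
    unfolding Hker_def by measurable
  have gb: "s \<in> S \<Longrightarrow> cmod z < 1 \<Longrightarrow> cmod (z / ((1-z)^2 + of_real (c s) * z)) \<le> cmod z / (1 - cmod z)^2" for s z
  proof -
    assume s: "s \<in> S" and z: "cmod z < 1"
    have d: "cmod ((1-z)^2 + of_real (c s) * z) \<ge> (1 - cmod z)^2" using key_denom[of "c s" z] cb[OF s] z by auto
    have "(1 - cmod z)^2 > 0" using z by simp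
    then show ?thesis using d by (simp add: norm_divide frac_le)
  qed
  have intF: "integrable M (\<lambda>s. of_real (A s / s) * Hker s z a)" if z: "cmod z < 1" for z
  proof (rule Bochner_Integration.integrable_bound[OF integrable_mult_right[OF intW, of "cmod z / (1 - cmod z)^2"]])
    show "AE s in M. norm (of_real (A s / s) * Hker s z a) \<le> norm (cmod z / (1 - cmod z)^2 * W s)"
    proof (rule AE_I2)
      fix s assume "s \<in> space M"
      then have s: "s \<in> S" using spM by simp
      have "norm (of_real (A s / s) * Hker s z a) = W s * cmod (z / ((1-z)^2 + of_real (c s) * z))"
        unfolding Feq[OF s, of z] norm_mult norm_minus_cancel norm_of_real using Wnn[OF s] by simp
      also have "\<dots> \<le> W s * (cmod z / (1 - cmod z)^2)" using gb[OF s z] Wnn[OF s] by (rule mult_left_mono)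
      also have "\<dots> \<le> norm (cmod z / (1 - cmod z)^2 * W s)" using Wnn[OF s] by (simp add: abs_mult mult.commute)
      finally show "norm (of_real (A s / s) * Hker s z a) \<le> norm (cmod z / (1 - cmod z)^2 * W s)" .
    qed
  qed (rule measF)
  have nF: "s \<in> space M \<Longrightarrow> cmod z < 1 \<Longrightarrow> norm (of_real (A s / s) * Hker s z a) \<le> cmod z / (1 - cmod z)^2 * W s" for s z
  proof -
    assume "s \<in> space M" and z: "cmod z < 1"
    then have s: "s \<in> S" using spM by simp
    have "norm (of_real (A s / s) * Hker s z a) = W s * cmod (z / ((1-z)^2 + of_real (c s) * z))"
      unfolding Feq[OF s, of z] norm_mult norm_minus_cancel norm_of_real using Wnn[OF s] by simp
    also have "\<dots> \<le> W s * (cmod z / (1 - cmod z)^2)" using gb[OF s z] Wnn[OF s] by (rule mult_left_mono)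
    finally show ?thesis by (simp add: mult.commute)
  qed
  have part1: "cmod (fnorm \<mu> \<alpha>0 A z a) \<le> cmod z / (1 - cmod z)^2" if z: "cmod z < 1" for z
  proof -
    define B where "B = cmod z / (1 - cmod z)^2"
    have "cmod (integral\<^sup>L M (\<lambda>s. of_real (A s / s) * Hker s z a)) \<le> integral\<^sup>L M (\<lambda>s. norm (of_real (A s / s) * Hker s z a))"
      by (rule integral_norm_bound)
    also have "\<dots> \<le> integral\<^sup>L M (\<lambda>s. B * W s)"
      by (rule integral_mono[OF integrable_norm[OF intF[OF z]] integrable_mult_right[OF intW]])
         (use nF z in \<open>auto simp: B_def\<close>)
    also have "\<dots> = B * IW" unfolding IW_def by simp
    finally have "cmod (integral\<^sup>L M (\<lambda>s. of_real (A s / s) * Hker s z a)) \<le> B * IW" .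
    then show ?thesis unfolding fn B_def using IWpos by (simp add: norm_divide divide_le_eq)
  qed
  have part2: "cmod (fnorm \<mu> \<alpha>0 A (of_real x) a) \<ge> \<bar>x\<bar> / (1 + \<bar>x\<bar>)^2" if x: "\<bar>x\<bar> < 1" for x
  proof -
    define L where "L = \<bar>x\<bar> / (1 + \<bar>x\<bar>)^2"
    define Dr where "Dr s = (1-x)^2 + c s * x" for s
    define h where "h s = W s * (x / Dr s)" for s
    define F where "F s = of_real (A s / s) * Hker s (of_real x) a" for s
    have zx: "cmod (of_real x :: complex) < 1" using x by simp
    have Fh: "s \<in> space M \<Longrightarrow> F s = - of_real (h s)" for s
      unfolding F_def using Feq[of s "of_real x"] spM by (simp add: h_def Dr_def)
    have intFx: "integrable M F" unfolding F_def by (rule intF[OF zx])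
    have inth: "integrable M h"
    proof -
      have "integrable M (\<lambda>s. - Re (F s))" using intFx by auto
      then show ?thesis by (rule Bochner_Integration.integrable_cong[OF refl, THEN iffD1, rotated]) (simp add: Fh)
    qed
    have intF_eq: "integral\<^sup>L M F = - of_real (integral\<^sup>L M h)"
    proof -
      have "integral\<^sup>L M F = integral\<^sup>L M (\<lambda>s. - of_real (h s) :: complex)"
        by (rule Bochner_Integration.integral_cong[OF refl]) (simp add: Fh)
      then show ?thesis by simp
    qed
    have pw: "L * W s \<le> sgn x * h s" if "s \<in> space M" for s
    proof -
      have s: "s \<in> S" using that spM by simp
      have D: "0 < Dr s" "Dr s \<le> (1 + \<bar>x\<bar>)^2" using Dr_bounds[of "c s" x] cb[OF s] x unfolding Dr_def by auto
      have "L \<le> \<bar>x\<bar> / Dr s" unfolding L_def using D by (intro divide_left_mono) auto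
      also have "\<bar>x\<bar> / Dr s = sgn x * (x / Dr s)" by (cases "x > 0"; cases "x < 0") auto
      finally have "L * W s \<le> sgn x * (x / Dr s) * W s" using Wnn[OF s] by (rule mult_right_mono)
      then show ?thesis unfolding h_def by (simp add: algebra_simps)
    qed
    have "L * IW = integral\<^sup>L M (\<lambda>s. L * W s)" unfolding IW_def by simp
    also have "\<dots> \<le> integral\<^sup>L M (\<lambda>s. sgn x * h s)"
      by (rule integral_mono[OF integrable_mult_right[OF intW] integrable_mult_right[OF inth]]) (rule pw)
    also have "\<dots> = sgn x * integral\<^sup>L M h" by simp
    also have "\<dots> \<le> \<bar>integral\<^sup>L M h\<bar>" by (cases "x > 0"; cases "x < 0") auto
    finally have "L * IW \<le> \<bar>integral\<^sup>L M h\<bar>" .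
    then show ?thesis unfolding fn F_def[symmetric] intF_eq L_def[symmetric] using IWpos
      by (simp add: norm_divide le_divide_eq)
  qed
  show ?thesis using part1 part2 by blast
qed

end
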